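(* Let $u$ be a drift function, $\alpha>0$, $g\in\mathcal E^{2+\alpha}_u$ and $x\in\mathbf X$. Write $h_k=g(X_{k+1})-Pg(X_k)$. Then for every $\varepsilon>0$, \[\frac1n\sum_{k=0}^{n-1}\mathbb E_x\big(h_k^2\mathbf 1_{\{|h_k|\ge\varepsilon\sqrt n\}}\big)\xrightarrow[n\to\infty]{}0\quad\text{and}\quad\sum_{n=1}^{\infty}\frac1{\sqrt n}\mathbb E_x\big(|h_n|\mathbf 1_{\{|h_n|\ge\varepsilon\sqrt n\}}\big)<\infty,\] and there exists $\delta>0$ such that \[\sum_{n=1}^\infty\frac1{n^2}\mathbb E_x\big(h_n^4\mathbf 1_{\{|h_n|\le\delta\sqrt n\}}\big)<\infty.\]
   Context: $(X_n)$ Markov chain on a complete separable metric space $\mathbf X$, $\mathbb P_x$ its law from $x$, $Pf(x)=\mathbb E_xf(X_1)$. $\tau$ is a $\theta$-compatible stopping time ($\mathbb P_x(\tau=0)=0$ and $\mathbb P_x$-a.s. $\tau\ge2\Rightarrow\tau\circ\theta=\tau-1$) with $\mathbb E_x\tau<\infty$ for all $x$; $Qf(x)=\mathbb E_x[f(X_\tau)\mathbf 1_{\tau<\infty}]$. A drift function is a Borel $u:\mathbf X\to[1,\infty)$ such that $u-Pu$ is bounded below and $Qu$, $x\mapsto\mathbb E_x\tau/u(x)$ and $P(u-Pu+B_u)/(u-Pu+B_u)$ are bounded on $\mathbf X$, where $B_u=\sup(Pu-u)+1$. For Borel $v\ge1$ and $p\ge1$, $\mathcal F^p_v$ is the space of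 Borel $f$ with $\sup|f|^p/v<\infty$; $\mathcal E^p_u:=\mathcal F^p_{u-Pu+B_u}$. *)

theory Defs
  imports "HOL-Probability.Probability"
begin

definition path_space :: "(nat \<Rightarrow> 'a::topological_space) measure" where
  "path_space = PiM UNIV (\<lambda>_. borel)"

text \<open>M x is the law P_x of a time-homogeneous Markov chain started at x
  (coordinate process on the path space); measurable in x; Markov property
  with transition kernel given by the law of the first step.\<close>
definition markov_family :: "('a::polish_space \<Rightarrow> (nat \<Rightarrow> 'a) measure) \<Rightarrow> bool" where
  "markov_family M \<longleftrightarrow>
     M \<in> borel \<rightarrow>\<^sub>M prob_algebra path_space \<and>
     (\<forall>x. AE \<omega> in M x. \<omega> 0 = x) \<and>
     (\<forall>x n (F :: (nat \<Rightarrow> 'a) \<Rightarrow> real) (f :: 'a \<Rightarrow> real).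
        F \<in> borel_measurable (PiM {..n} (\<lambda>_. borel)) \<and> (\<exists>C. \<forall>y. \<bar>F y\<bar> \<le> C) \<and>
        f \<in> borel_measurable borel \<and> (\<exists>C. \<forall>y. \<bar>f y\<bar> \<le> C) \<longrightarrow>
        (\<integral>\<omega>. F (restrict \<omega> {..n}) * f (\<omega> (Suc n)) \<partial>M x) =
        (\<integral>\<omega>. F (restrict \<omega> {..n}) * (\<integral>\<omega>'. f (\<omega>' 1) \<partial>M (\<omega> n)) \<partial>M x))"

definition shift :: "(nat \<Rightarrow> 'a) \<Rightarrow> (nat \<Rightarrow> 'a)" where
  "shift \<omega> = (\<lambda>k. \<omega> (Suc k))"

definition nat_stopping_time :: "((nat \<Rightarrow> 'a::topological_space) \<Rightarrow> enat) \<Rightarrow> bool" where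
  "nat_stopping_time \<tau> \<longleftrightarrow>
     (\<forall>n. \<exists>A \<in> sets (PiM {..n} (\<lambda>_. (borel :: 'a measure))).
        \<forall>\<omega>. \<tau> \<omega> \<le> enat n \<longleftrightarrow> restrict \<omega> {..n} \<in> A)"

definition theta_compatible :: "('a \<Rightarrow> (nat \<Rightarrow> 'a) measure) \<Rightarrow> ((nat \<Rightarrow> 'a) \<Rightarrow> enat) \<Rightarrow> bool" where
  "theta_compatible M \<tau> \<longleftrightarrow>
     (\<forall>x. AE \<omega> in M x. \<tau> \<omega> \<noteq> 0) \<and>
     (\<forall>x. AE \<omega> in M x. 2 \<le> \<tau> \<omega> \<longrightarrow> \<tau> (shift \<omega>) = \<tau> \<omega> - 1)"

definition Pop :: "('a \<Rightarrow> (nat \<Rightarrow> 'a) measure) \<Rightarrow> ('a \<Rightarrow> real) \<Rightarrow> 'a \<Rightarrow> real" where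
  "Pop M f x = (\<integral>\<omega>. f (\<omega> 1) \<partial>M x)"

definition Ppos :: "('a \<Rightarrow> (nat \<Rightarrow> 'a) measure) \<Rightarrow> ('a \<Rightarrow> real) \<Rightarrow> 'a \<Rightarrow> ennreal" where
  "Ppos M f x = (\<integral>\<^sup>+\<omega>. ennreal (f (\<omega> 1)) \<partial>M x)"

definition Qpos :: "('a \<Rightarrow> (nat \<Rightarrow> 'a) measure) \<Rightarrow> ((nat \<Rightarrow> 'a) \<Rightarrow> enat) \<Rightarrow> ('a \<Rightarrow> real) \<Rightarrow> 'a \<Rightarrow> ennreal" where
  "Qpos M \<tau> f x = (\<integral>\<^sup>+\<omega>. (case \<tau> \<omega> of enat k \<Rightarrow> ennreal (f (\<omega> k)) | \<infinity> \<Rightarrow> 0) \<partial>M x)"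

definition Bconst :: "('a \<Rightarrow> (nat \<Rightarrow> 'a) measure) \<Rightarrow> ('a \<Rightarrow> real) \<Rightarrow> real" where
  "Bconst M u = Sup (range (\<lambda>x. Pop M u x - u x)) + 1"

definition wfun :: "('a \<Rightarrow> (nat \<Rightarrow> 'a) measure) \<Rightarrow> ('a \<Rightarrow> real) \<Rightarrow> 'a \<Rightarrow> real" where
  "wfun M u x = u x - Pop M u x + Bconst M u"

definition drift_function ::
  "('a::polish_space \<Rightarrow> (nat \<Rightarrow> 'a) measure) \<Rightarrow> ((nat \<Rightarrow> 'a) \<Rightarrow> enat) \<Rightarrow> ('a \<Rightarrow> real) \<Rightarrow> bool" where
  "drift_function M \<tau> u \<longleftrightarrow>
     u \<in> borel_measurable borel \<and> (\<forall>x. 1 \<le> u x) \<and>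
     (\<forall>x. integrable (M x) (\<lambda>\<omega>. u (\<omega> 1))) \<and>
     bdd_below (range (\<lambda>x. u x - Pop M u x)) \<and>
     (\<exists>C. \<forall>x. Qpos M \<tau> u x \<le> ennreal C) \<and>
     (\<exists>C. \<forall>x. (\<integral>\<^sup>+\<omega>. ennreal_of_enat (\<tau> \<omega>) \<partial>M x) \<le> ennreal C * ennreal (u x)) \<and>
     (\<exists>C. \<forall>x. Ppos M (wfun M u) x \<le> ennreal C * ennreal (wfun M u x))"

definition Fspace :: "real \<Rightarrow> ('a::topological_space \<Rightarrow> real) \<Rightarrow> ('a \<Rightarrow> real) set" where
  "Fspace p v = {f. f \<in> borel_measurable borel \<and> (\<exists>C. \<forall>x. \<bar>f x\<bar> powr p / v x \<le> C)}"

definition Espace :: "('a::polish_space \<Rightarrow> (nat \<Rightarrow> 'a) measure) \<Rightarrow> ('a \<Rightarrow> real) \<Rightarrow> real \<Rightarrow> ('a \<Rightarrow> real) set" where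
  "Espace M u p = Fspace p (wfun M u)"

end

theory Submission
  imports Defs
begin


lemma mf_space:
  assumes "markov_family M"
  shows "prob_space (M y)" "sets (M y) = sets path_space"
proof -
  have "M \<in> borel \<rightarrow>\<^sub>M prob_algebra path_space" using assms unfolding markov_family_def by blast
  then have "M y \<in> space (prob_algebra path_space)" by (rule measurable_space) simp
  then show "prob_space (M y)" "sets (M y) = sets path_space" by (auto simp: space_prob_algebra)
qed

lemma mf_sub:
  assumes "markov_family M"
  shows "M \<in> borel \<rightarrow>\<^sub>M subprob_algebra path_space"
  using assms unfolding markov_family_def by (blast intro: measurable_prob_algebraD)

lemma meas_coord:
  assumes "markov_family M"
  shows "(\<lambda>\<omega>. \<omega> k) \<in> M y \<rightarrow>\<^sub>M (borel :: 'a::polish_space measure)"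
proof -
  have "(\<lambda>\<omega>. \<omega> k) \<in> path_space \<rightarrow>\<^sub>M (borel :: 'a measure)"
    unfolding path_space_def by (rule measurable_component_singleton) simp
  then show ?thesis using mf_space(2)[OF assms] by (simp cong: measurable_cong_sets)
qed

lemma meas_coord_ps:
  shows "(\<lambda>\<omega>. \<omega> k) \<in> path_space \<rightarrow>\<^sub>M (borel :: 'a::polish_space measure)"
    unfolding path_space_def by (rule measurable_component_singleton) simp

lemma meas_Pop:
  assumes "markov_family M" "f \<in> borel_measurable borel"
  shows "Pop M f \<in> borel_measurable borel"
proof -
  have f1: "(\<lambda>\<omega>. f (\<omega> 1)) \<in> borel_measurable path_space"
    using measurable_compose[OF meas_coord_ps assms(2)] .
  have "(\<lambda>N. integral\<^sup>L N (\<lambda>\<omega>. f (\<omega> 1))) \<in> subprob_algebra path_space \<rightarrow>\<^sub>M borel"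
    using integral_measurable_subprob_algebra[OF f1] .
  from measurable_compose[OF mf_sub[OF assms(1)] this] show ?thesis
    unfolding Pop_def comp_def by simp
qed

lemma meas_nnP:
  assumes "markov_family M" "f \<in> borel_measurable borel"
  shows "(\<lambda>y. \<integral>\<^sup>+\<omega>. ennreal (f (\<omega> 1)) \<partial>M y) \<in> borel_measurable borel"
proof -
  have f1: "(\<lambda>\<omega>. ennreal (f (\<omega> 1))) \<in> borel_measurable path_space"
    using measurable_compose[OF meas_coord_ps assms(2)] by simp
  have "(\<lambda>N. integral\<^sup>N N (\<lambda>\<omega>. ennreal (f (\<omega> 1)))) \<in> borel_measurable (subprob_algebra path_space)"
    using nn_integral_measurable_subprob_algebra[OF f1] .
  from measurable_compose[OF mf_sub[OF assms(1)] this] show ?thesis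
    unfolding comp_def by simp
qed

lemma ennreal_SUP_min:
  assumes "0 \<le> (a::real)"
  shows "(SUP m. ennreal (min a (real m))) = ennreal a"
proof (rule antisym)
  show "(SUP m. ennreal (min a (real m))) \<le> ennreal a"
    by (rule SUP_least) (simp add: ennreal_leI)
  obtain m where "a \<le> real m" using real_arch_simple by blast
  then have "ennreal a = ennreal (min a (real m))" by simp
  then show "ennreal a \<le> (SUP m. ennreal (min a (real m)))"
    by (metis UNIV_I SUP_upper)
qed

lemma markov_K:
  assumes mf: "markov_family M" and fm: "f \<in> borel_measurable borel" and f0: "\<And>y. 0 \<le> f y"
  shows "(\<integral>\<^sup>+\<omega>. ennreal (f (\<omega> (Suc n))) \<partial>M x) =
         (\<integral>\<^sup>+\<omega>. (\<integral>\<^sup>+\<omega>'. ennreal (f (\<omega>' 1)) \<partial>M (\<omega> n)) \<partial>M x)"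
proof -
  define fm' where "fm' m y = min (f y) (real m)" for m y
  have fmm: "fm' m \<in> borel_measurable borel" for m unfolding fm'_def using fm by measurable
  have fm0: "0 \<le> fm' m y" for m y unfolding fm'_def using f0 by simp
  have fmb: "\<bar>fm' m y\<bar> \<le> real m" for m y unfolding fm'_def using f0 by simp
  have ps: "prob_space (M y)" for y using mf_space[OF mf] by blast
  have Mn: "(\<lambda>\<omega>. M (\<omega> n)) \<in> M x \<rightarrow>\<^sub>M subprob_algebra path_space"
    using measurable_compose[OF meas_coord[OF mf] mf_sub[OF mf]] by (simp add: comp_def)
  have c1: "(\<lambda>\<omega>. \<omega> 1) \<in> M y \<rightarrow>\<^sub>M (borel :: 'a measure)" for y by (rule meas_coord[OF mf])
  have cS: "(\<lambda>\<omega>. \<omega> (Suc n)) \<in> M x \<rightarrow>\<^sub>M (borel :: 'a measure)" by (rule meas_coord[OF mf])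
  have inner_meas: "(\<lambda>\<omega>. \<integral>\<omega>'. fm' m (\<omega>' 1) \<partial>M (\<omega> n)) \<in> borel_measurable (M x)" for m
  proof -
    have "(\<lambda>\<omega>. fm' m (\<omega> 1)) \<in> borel_measurable path_space"
      using measurable_compose[OF meas_coord_ps fmm] .
    from measurable_compose[OF Mn integral_measurable_subprob_algebra[OF this]] show ?thesis by (simp add: comp_def)
  qed
  have inner_nmeas: "(\<lambda>\<omega>. \<integral>\<^sup>+\<omega>'. ennreal (fm' m (\<omega>' 1)) \<partial>M (\<omega> n)) \<in> borel_measurable (M x)" for m
  proof -
    have "(\<lambda>\<omega>. ennreal (fm' m (\<omega> 1))) \<in> borel_measurable path_space"
      using measurable_compose[OF meas_coord_ps fmm] by simp
    from measurable_compose[OF Mn nn_integral_measurable_subprob_algebra[OF this]] show ?thesis by (simp add: comp_def)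
  qed
  have int_in: "(\<integral>\<^sup>+\<omega>'. ennreal (fm' m (\<omega>' 1)) \<partial>M y) = ennreal (\<integral>\<omega>'. fm' m (\<omega>' 1) \<partial>M y)" for m y
  proof (rule nn_integral_eq_integral)
    interpret prob_space "M y" by (rule ps)
    show "integrable (M y) (\<lambda>\<omega>'. fm' m (\<omega>' 1))"
      by (rule integrable_const_bound[where B="real m"]) (use fmb measurable_compose[OF c1 fmm] in auto)
  qed (simp add: fm0)
  have step: "(\<integral>\<^sup>+\<omega>. ennreal (fm' m (\<omega> (Suc n))) \<partial>M x) =
         (\<integral>\<^sup>+\<omega>. (\<integral>\<^sup>+\<omega>'. ennreal (fm' m (\<omega>' 1)) \<partial>M (\<omega> n)) \<partial>M x)" for m
  proof -
    interpret prob_space "M x" by (rule ps)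
    have mk: "(\<integral>\<omega>. (\<lambda>_. 1::real) (restrict \<omega> {..n}) * fm' m (\<omega> (Suc n)) \<partial>M x) =
        (\<integral>\<omega>. (\<lambda>_. 1::real) (restrict \<omega> {..n}) * (\<integral>\<omega>'. fm' m (\<omega>' 1) \<partial>M (\<omega> n)) \<partial>M x)"
      using mf unfolding markov_family_def
      apply (elim conjE)
      apply (erule allE[of _ x], erule allE[of _ n], erule allE[of _ "\<lambda>_. 1"], erule allE[of _ "fm' m"])
      using fmm fmb by (auto intro: exI[of _ 1] exI[of _ "real m"])
    have i1: "integrable (M x) (\<lambda>\<omega>. fm' m (\<omega> (Suc n)))"
      by (rule integrable_const_bound[where B="real m"]) (use fmb measurable_compose[OF cS fmm] in auto)
    have i2: "integrable (M x) (\<lambda>\<omega>. \<integral>\<omega>'. fm' m (\<omega>' 1) \<partial>M (\<omega> n))"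
    proof (rule integrable_const_bound[where B="real m"])
      show "AE \<omega> in M x. norm (\<integral>\<omega>'. fm' m (\<omega>' 1) \<partial>M (\<omega> n)) \<le> real m"
      proof (rule AE_I2)
        fix \<omega>
        interpret p2: prob_space "M (\<omega> n)" by (rule ps)
        have ii: "integrable (M (\<omega> n)) (\<lambda>\<omega>'. fm' m (\<omega>' 1))"
          by (rule p2.integrable_const_bound[where B="real m"]) (use fmb measurable_compose[OF c1 fmm] in auto)
        have a1: "0 \<le> (\<integral>\<omega>'. fm' m (\<omega>' 1) \<partial>M (\<omega> n))" by (simp add: fm0 Bochner_Integration.integral_nonneg)
        have a2: "(\<integral>\<omega>'. fm' m (\<omega>' 1) \<partial>M (\<omega> n)) \<le> real m"
          by (rule p2.integral_le_const[OF ii]) (use fmb abs_le_D1 in blast)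
        have "norm (\<integral>\<omega>'. fm' m (\<omega>' 1) \<partial>M (\<omega> n)) \<le> real m" using a1 a2 by simp
        then show "norm (\<integral>\<omega>'. fm' m (\<omega>' 1) \<partial>M (\<omega> n)) \<le> real m" .
      qed
    qed (rule inner_meas)
    have "(\<integral>\<^sup>+\<omega>. ennreal (fm' m (\<omega> (Suc n))) \<partial>M x) = ennreal (\<integral>\<omega>. fm' m (\<omega> (Suc n)) \<partial>M x)"
      by (rule nn_integral_eq_integral[OF i1]) (simp add: fm0)
    also have "\<dots> = ennreal (\<integral>\<omega>. (\<integral>\<omega>'. fm' m (\<omega>' 1) \<partial>M (\<omega> n)) \<partial>M x)" using mk by simp
    also have "\<dots> = (\<integral>\<^sup>+\<omega>. ennreal (\<integral>\<omega>'. fm' m (\<omega>' 1) \<partial>M (\<omega> n)) \<partial>M x)"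
    proof (rule nn_integral_eq_integral[OF i2, symmetric])
      show "AE \<omega> in M x. 0 \<le> (\<integral>\<omega>'. fm' m (\<omega>' 1) \<partial>M (\<omega> n))"
        by (intro AE_I2 integral_nonneg) (simp add: fm0)
    qed
    also have "\<dots> = (\<integral>\<^sup>+\<omega>. (\<integral>\<^sup>+\<omega>'. ennreal (fm' m (\<omega>' 1)) \<partial>M (\<omega> n)) \<partial>M x)"
      by (simp only: int_in)
    finally show ?thesis .
  qed
  have incf: "incseq (\<lambda>m y. ennreal (fm' m y))"
    by (intro incseq_SucI le_funI) (simp add: fm'_def ennreal_leI)
  have lim: "(SUP m. ennreal (fm' m y)) = ennreal (f y)" for y
    unfolding fm'_def by (rule ennreal_SUP_min[OF f0])
  have "(\<integral>\<^sup>+\<omega>. ennreal (f (\<omega> (Suc n))) \<partial>M x) = (\<integral>\<^sup>+\<omega>. (SUP m. ennreal (fm' m (\<omega> (Suc n)))) \<partial>M x)"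
    by (simp add: lim)
  also have "\<dots> = (SUP m. \<integral>\<^sup>+\<omega>. ennreal (fm' m (\<omega> (Suc n))) \<partial>M x)"
  proof (rule nn_integral_monotone_convergence_SUP)
    show "incseq (\<lambda>m \<omega>. ennreal (fm' m (\<omega> (Suc n))))"
      using incf by (auto simp: incseq_def le_fun_def)
  qed (use measurable_compose[OF cS fmm] in simp)
  also have "\<dots> = (SUP m. \<integral>\<^sup>+\<omega>. (\<integral>\<^sup>+\<omega>'. ennreal (fm' m (\<omega>' 1)) \<partial>M (\<omega> n)) \<partial>M x)"
    by (simp add: step)
  also have "\<dots> = (\<integral>\<^sup>+\<omega>. (SUP m. \<integral>\<^sup>+\<omega>'. ennreal (fm' m (\<omega>' 1)) \<partial>M (\<omega> n)) \<partial>M x)"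
  proof (rule nn_integral_monotone_convergence_SUP[symmetric])
    show "incseq (\<lambda>m \<omega>. \<integral>\<^sup>+\<omega>'. ennreal (fm' m (\<omega>' 1)) \<partial>M (\<omega> n))"
      using incf by (auto simp: incseq_def le_fun_def intro!: nn_integral_mono)
  qed (rule inner_nmeas)
  also have "\<dots> = (\<integral>\<^sup>+\<omega>. (\<integral>\<^sup>+\<omega>'. ennreal (f (\<omega>' 1)) \<partial>M (\<omega> n)) \<partial>M x)"
  proof (rule nn_integral_cong)
    fix \<omega>
    have "(SUP m. \<integral>\<^sup>+\<omega>'. ennreal (fm' m (\<omega>' 1)) \<partial>M (\<omega> n)) = (\<integral>\<^sup>+\<omega>'. (SUP m. ennreal (fm' m (\<omega>' 1))) \<partial>M (\<omega> n))"
    proof (rule nn_integral_monotone_convergence_SUP[symmetric])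
      show "incseq (\<lambda>m \<omega>'. ennreal (fm' m (\<omega>' 1)))"
        using incf by (auto simp: incseq_def le_fun_def)
    qed (use measurable_compose[OF c1 fmm] in simp)
    then show "(SUP m. \<integral>\<^sup>+\<omega>'. ennreal (fm' m (\<omega>' 1)) \<partial>M (\<omega> n)) = (\<integral>\<^sup>+\<omega>'. ennreal (f (\<omega>' 1)) \<partial>M (\<omega> n))"
      by (simp add: lim)
  qed
  finally show ?thesis .
qed



lemma abel_summable:
  fixes a c :: "nat \<Rightarrow> real"
  assumes a0: "\<And>k. 0 \<le> a k" and c0: "\<And>k. 0 \<le> c k" and cdec: "\<And>k. c (Suc k) \<le> c k"
    and cs: "summable c" and P: "\<And>n. (\<Sum>k<n. a k) \<le> L * (real n + 1)"
  shows "summable (\<lambda>k. a k * c k)"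
proof -
  define S where "S n = (\<Sum>k<n. a k)" for n
  have L0: "0 \<le> L" using P[of 0] by simp
  have id1: "(\<Sum>k<n. a k * c k) = c n * S n + (\<Sum>k<n. (c k - c (Suc k)) * S (Suc k))" for n
    by (induction n) (auto simp: S_def algebra_simps)
  have id2: "(\<Sum>k<n. (c k - c (Suc k)) * (real k + 2)) + (real n + 1) * c n = c 0 + (\<Sum>k<n. c k)" for n
    by (induction n) (auto simp: algebra_simps)
  have bnd: "(\<Sum>k<n. a k * c k) \<le> L * (c 0 + suminf c)" for n
  proof -
    have "(\<Sum>k<n. a k * c k) \<le> c n * (L * (real n + 1)) + (\<Sum>k<n. (c k - c (Suc k)) * (L * (real (Suc k) + 1)))"
      unfolding id1
      by (intro add_mono sum_mono mult_left_mono) (use P[of "Suc _"] P c0 cdec in \<open>auto simp: S_def algebra_simps\<close>)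
    also have "\<dots> = L * ((\<Sum>k<n. (c k - c (Suc k)) * (real k + 2)) + (real n + 1) * c n)"
      by (simp add: sum_distrib_left algebra_simps)
    also have "\<dots> = L * (c 0 + (\<Sum>k<n. c k))" by (simp add: id2)
    also have "\<dots> \<le> L * (c 0 + suminf c)"
      by (intro mult_left_mono add_left_mono sum_le_suminf cs) (use c0 L0 in auto)
    finally show ?thesis .
  qed
  show ?thesis by (rule summableI_nonneg_bounded[OF _ bnd]) (simp add: a0 c0)
qed

lemma powr_summable_shift:
  assumes "s > 1"
  shows "summable (\<lambda>k::nat. real (Suc k) powr (- s))"
proof -
  have "summable (\<lambda>k::nat. real k powr (- s))"
    using assms by (simp add: summable_real_powr_iff)
  then show ?thesis by (subst summable_Suc_iff) simp
qed

lemma powr_dec_shift: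
  assumes "s \<ge> 0"
  shows "real (Suc (Suc k)) powr (- s) \<le> real (Suc k) powr (- s)"
  using assms by (intro powr_mono2') auto

lemma PI4:
  fixes a b p :: real
  assumes "0 \<le> a" "0 \<le> b" "0 < p"
  shows "(a + b) powr p \<le> 2 powr p * (a powr p + b powr p)"
proof -
  have "(a + b) powr p \<le> (2 * max a b) powr p"
    using assms by (intro powr_mono2) auto
  also have "\<dots> = 2 powr p * (max a b) powr p" using assms by (simp add: powr_mult)
  also have "\<dots> \<le> 2 powr p * (a powr p + b powr p)"
    by (intro mult_left_mono) (auto simp: max_def)
  finally show ?thesis .
qed

lemma PI1:
  fixes h e \<alpha> :: real
  assumes "0 < e" "e \<le> \<bar>h\<bar>" "0 < \<alpha>"
  shows "h\<^sup>2 \<le> \<bar>h\<bar> powr (2 + \<alpha>) / e powr \<alpha>"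
proof -
  have hp: "0 < \<bar>h\<bar>" using assms by auto
  have "h\<^sup>2 * e powr \<alpha> \<le> \<bar>h\<bar> powr 2 * \<bar>h\<bar> powr \<alpha>"
    using assms hp by (intro mult_mono powr_mono2) (auto simp: powr_numeral)
  also have "\<dots> = \<bar>h\<bar> powr (2 + \<alpha>)" by (simp add: powr_add)
  finally show ?thesis using assms by (simp add: field_simps)
qed

lemma PI2:
  fixes h e \<alpha> :: real
  assumes "0 < e" "e \<le> \<bar>h\<bar>" "0 < \<alpha>"
  shows "\<bar>h\<bar> \<le> \<bar>h\<bar> powr (2 + \<alpha>) / e powr (1 + \<alpha>)"
proof -
  have hp: "0 < \<bar>h\<bar>" using assms by auto
  have "\<bar>h\<bar> * e powr (1 + \<alpha>) \<le> \<bar>h\<bar> powr 1 * \<bar>h\<bar> powr (1 + \<alpha>)"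
    using assms hp by (intro mult_mono powr_mono2) auto
  also have "\<dots> = \<bar>h\<bar> powr (1 + (1 + \<alpha>))" by (simp only: powr_add)
  also have "\<dots> = \<bar>h\<bar> powr (2 + \<alpha>)" by simp
  finally show ?thesis using assms by (simp add: field_simps)
qed

lemma PI3:
  fixes h m \<alpha> :: real
  assumes "1 \<le> m" "\<bar>h\<bar> \<le> sqrt m" "0 < \<alpha>"
  shows "h ^ 4 \<le> m powr (1 - min \<alpha> 2 / 2) * (1 + \<bar>h\<bar> powr (2 + \<alpha>))"
proof (cases "\<bar>h\<bar> \<le> 1")
  case True
  have "h ^ 4 = \<bar>h\<bar> ^ 4" by simp
  also have "\<dots> \<le> 1" using True by (intro power_le_one) auto
  also have "1 \<le> m powr (1 - min \<alpha> 2 / 2)" using assms by (intro ge_one_powr_ge_zero) auto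
  also have "\<dots> \<le> m powr (1 - min \<alpha> 2 / 2) * (1 + \<bar>h\<bar> powr (2 + \<alpha>))"
    using assms by (intro mult_le_cancel_left1[THEN iffD2]) auto
  finally show ?thesis .
next
  case False
  define \<beta> where "\<beta> = min \<alpha> 2"
  have hp: "1 < \<bar>h\<bar>" using False by simp
  have b: "0 \<le> 2 - \<beta>" "\<beta> \<le> \<alpha>" unfolding \<beta>_def by auto
  have "h ^ 4 = \<bar>h\<bar> powr (2 - \<beta>) * \<bar>h\<bar> powr (2 + \<beta>)"
  proof -
    have "h ^ 4 = \<bar>h\<bar> ^ 4" by simp
    also have "\<dots> = \<bar>h\<bar> powr (real 4)" using hp by (subst powr_realpow) auto
    also have "\<dots> = \<bar>h\<bar> powr ((2 - \<beta>) + (2 + \<beta>))" by simp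
    finally show ?thesis by (simp only: powr_add)
  qed
  also have "\<dots> \<le> (sqrt m) powr (2 - \<beta>) * \<bar>h\<bar> powr (2 + \<alpha>)"
    using hp b assms by (intro mult_mono powr_mono2 powr_mono) auto
  also have "(sqrt m) powr (2 - \<beta>) = m powr (1 - \<beta> / 2)"
    using assms by (simp add: sqrt_def root_powr_inverse powr_powr field_simps)
  also have "m powr (1 - \<beta> / 2) * \<bar>h\<bar> powr (2 + \<alpha>) \<le> m powr (1 - \<beta> / 2) * (1 + \<bar>h\<bar> powr (2 + \<alpha>))"
    by (intro mult_left_mono) auto
  finally show ?thesis unfolding \<beta>_def .
qed

lemma sqrt_powr_eq: "0 \<le> m \<Longrightarrow> sqrt m powr a = m powr (a / 2)"
  by (simp add: powr_half_sqrt[symmetric] powr_powr)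

lemma PW1:
  fixes m \<epsilon> \<alpha> :: real
  assumes "0 < m" "0 < \<epsilon>"
  shows "1 / sqrt m * (1 / (\<epsilon> * sqrt m) powr (1 + \<alpha>)) = \<epsilon> powr (- (1 + \<alpha>)) * m powr (- (1 + \<alpha> / 2))"
proof -
  have "(\<epsilon> * sqrt m) powr (1 + \<alpha>) = \<epsilon> powr (1 + \<alpha>) * m powr ((1 + \<alpha>) / 2)"
    using assms by (simp add: powr_mult sqrt_powr_eq)
  moreover have "sqrt m = m powr (1/2)" using assms by (simp add: powr_half_sqrt)
  ultimately have "1 / sqrt m * (1 / (\<epsilon> * sqrt m) powr (1 + \<alpha>)) = 1 / (\<epsilon> powr (1 + \<alpha>) * (m powr (1/2) * m powr ((1 + \<alpha>) / 2)))"
    by (simp add: field_simps)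
  also have "m powr (1/2) * m powr ((1 + \<alpha>) / 2) = m powr (1 + \<alpha> / 2)"
    by (simp add: powr_add[symmetric] field_simps)
  finally have X: "1 / sqrt m * (1 / (\<epsilon> * sqrt m) powr (1 + \<alpha>)) = 1 / (\<epsilon> powr (1 + \<alpha>) * m powr (1 + \<alpha> / 2))" .
  show ?thesis unfolding X powr_minus by (simp add: field_simps)
qed

lemma PW2:
  fixes m b :: real
  assumes "0 < m"
  shows "1 / m\<^sup>2 * m powr (1 - b / 2) = m powr (- (1 + b / 2))"
proof -
  have "m\<^sup>2 = m powr 2" using assms by (simp add: powr_numeral)
  then have "1 / m\<^sup>2 * m powr (1 - b / 2) = m powr (1 - b/2) / m powr 2" by simp
  also have "\<dots> = m powr ((1 - b/2) - 2)" by (simp only: powr_diff)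
  also have "(1 - b/2) - 2 = -(1+b/2)" by simp
  finally show ?thesis .
qed

lemma PW3:
  fixes n \<epsilon> \<alpha> L :: real
  assumes "1 \<le> n" "0 < \<epsilon>" "0 \<le> L"
  shows "(1 / n) * (1 / (\<epsilon> * sqrt n) powr \<alpha>) * (L * (n + 1)) \<le> 2 * L * \<epsilon> powr (- \<alpha>) * n powr (- (\<alpha> / 2))"
proof -
  have e: "1 / (\<epsilon> * sqrt n) powr \<alpha> = \<epsilon> powr (- \<alpha>) * n powr (- (\<alpha> / 2))"
    using assms by (simp add: powr_mult sqrt_powr_eq powr_minus field_simps)
  have q: "(1 / n) * (n + 1) \<le> 2" using assms by (simp add: field_simps)
  have "(1 / n) * (1 / (\<epsilon> * sqrt n) powr \<alpha>) * (L * (n + 1)) = ((1 / n) * (n + 1)) * (L * (\<epsilon> powr (- \<alpha>) * n powr (- (\<alpha> / 2))))"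
    unfolding e by (simp add: field_simps)
  also have "\<dots> \<le> 2 * (L * (\<epsilon> powr (- \<alpha>) * n powr (- (\<alpha> / 2))))"
    using q assms by (intro mult_right_mono) auto
  finally show ?thesis by (simp add: mult.assoc)
qed



lemma int_bound:
  fixes t q :: "'b \<Rightarrow> real"
  assumes N: "prob_space N" and t0: "\<And>\<omega>. 0 \<le> t \<omega>" and tb: "\<And>\<omega>. t \<omega> \<le> c * (d + q \<omega>)"
    and c0: "0 \<le> c" and d0: "0 \<le> d" and q0: "\<And>\<omega>. 0 \<le> q \<omega>" and qm: "q \<in> borel_measurable N"
    and qi: "(\<integral>\<^sup>+\<omega>. ennreal (q \<omega>) \<partial>N) \<le> ennreal r" and r0: "0 \<le> r"
  shows "integral\<^sup>L N t \<le> c * (d + r)"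
proof (rule integral_real_bounded)
  show "0 \<le> c * (d + r)" using c0 d0 r0 by simp
  interpret prob_space N by (rule N)
  have "(\<integral>\<^sup>+\<omega>. ennreal (t \<omega>) \<partial>N) \<le> (\<integral>\<^sup>+\<omega>. (ennreal (c * d) + ennreal c * ennreal (q \<omega>)) \<partial>N)"
  proof (intro nn_integral_mono)
    fix \<omega>
    have "ennreal (c * d) + ennreal c * ennreal (q \<omega>) = ennreal (c * (d + q \<omega>))"
      using c0 d0 q0[of \<omega>] by (simp only: ennreal_mult[symmetric] ennreal_plus[symmetric] distrib_left mult_nonneg_nonneg)
    then show "ennreal (t \<omega>) \<le> ennreal (c * d) + ennreal c * ennreal (q \<omega>)"
      using tb[of \<omega>] by (simp add: ennreal_leI)
  qed
  also have "\<dots> = ennreal (c * d) + ennreal c * (\<integral>\<^sup>+\<omega>. ennreal (q \<omega>) \<partial>N)"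
    using qm by (simp add: nn_integral_add nn_integral_cmult emeasure_space_1)
  also have "\<dots> \<le> ennreal (c * d) + ennreal c * ennreal r"
    by (intro add_left_mono mult_left_mono qi) auto
  also have "\<dots> = ennreal (c * (d + r))"
    using c0 d0 r0 by (simp only: ennreal_mult[symmetric] ennreal_plus[symmetric] distrib_left mult_nonneg_nonneg)
  finally show "integral\<^sup>N N t \<le> ennreal (c * (d + r))" .
qed

theorem mainTheorem19:
  fixes M :: "'a::polish_space \<Rightarrow> (nat \<Rightarrow> 'a) measure"
    and \<tau> :: "(nat \<Rightarrow> 'a) \<Rightarrow> enat"
    and u g :: "'a \<Rightarrow> real" and \<alpha> :: real and x :: 'a
  assumes "markov_family M"
    and "nat_stopping_time \<tau>"
    and "theta_compatible M \<tau>"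
    and "\<forall>y. (\<integral>\<^sup>+\<omega>. ennreal_of_enat (\<tau> \<omega>) \<partial>M y) < \<infinity>"
    and "drift_function M \<tau> u"
    and "\<alpha> > 0"
    and "g \<in> Espace M u (2 + \<alpha>)"
  defines "h \<equiv> (\<lambda>k \<omega>. g (\<omega> (Suc k)) - Pop M g (\<omega> k))"
  shows "(\<forall>\<epsilon>>0.
           ((\<lambda>n. (1 / real n) * (\<Sum>k<n. \<integral>\<omega>. (if \<bar>h k \<omega>\<bar> \<ge> \<epsilon> * sqrt (real n) then (h k \<omega>)\<^sup>2 else 0) \<partial>M x))
              \<longlonglongrightarrow> 0) \<and>
           summable (\<lambda>n. (1 / sqrt (real (Suc n))) *
              (\<integral>\<omega>. (if \<bar>h (Suc n) \<omega>\<bar> \<ge> \<epsilon> * sqrt (real (Suc n)) then \<bar>h (Suc n) \<omega>\<bar> else 0) \<partial>M x)))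
         \<and> (\<exists>\<delta>>0. summable (\<lambda>n. (1 / (real (Suc n))\<^sup>2) *
              (\<integral>\<omega>. (if \<bar>h (Suc n) \<omega>\<bar> \<le> \<delta> * sqrt (real (Suc n)) then (h (Suc n) \<omega>) ^ 4 else 0) \<partial>M x)))"
proof -
  note mf = assms(1)
  define p where "p = 2 + \<alpha>"
  have p1: "1 \<le> p" "0 < p" using assms(6) by (auto simp: p_def)
  have um: "u \<in> borel_measurable borel" and u1: "\<And>y. 1 \<le> u y"
    and ui: "\<And>y. integrable (M y) (\<lambda>\<omega>. u (\<omega> 1))"
    and bb: "bdd_below (range (\<lambda>x. u x - Pop M u x))"
    using assms(5) unfolding drift_function_def by auto
  have gm: "g \<in> borel_measurable borel" and "\<exists>C. \<forall>y. \<bar>g y\<bar> powr p / wfun M u y \<le> C"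
    using assms(7) unfolding Espace_def Fspace_def p_def by auto
  then obtain C where C: "\<And>y. \<bar>g y\<bar> powr p / wfun M u y \<le> C" by blast
  have ps: "prob_space (M y)" for y using mf_space[OF mf] by blast
  have coord: "(\<lambda>\<omega>. \<omega> k) \<in> M y \<rightarrow>\<^sub>M (borel :: 'a measure)" for k y by (rule meas_coord[OF mf])
  have Pum: "Pop M u \<in> borel_measurable borel" by (rule meas_Pop[OF mf um])
  have Pgm: "Pop M g \<in> borel_measurable borel" by (rule meas_Pop[OF mf gm])
  have Pu0: "0 \<le> Pop M u y" for y
    unfolding Pop_def using u1 by (intro Bochner_Integration.integral_nonneg) (auto intro: order_trans[OF zero_le_one])
  define B where "B = Bconst M u"
  obtain mb where mb: "\<And>y. mb \<le> u y - Pop M u y" using bb unfolding bdd_below_def by auto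
  have ba: "bdd_above (range (\<lambda>x. Pop M u x - u x))"
  proof (rule bdd_aboveI[where M="- mb"])
    fix z assume "z \<in> range (\<lambda>x. Pop M u x - u x)"
    then obtain y where "z = Pop M u y - u y" by auto
    with mb[of y] show "z \<le> - mb" by simp
  qed
  have w1: "1 \<le> wfun M u y" for y
  proof -
    have "Pop M u y - u y \<le> Sup (range (\<lambda>x. Pop M u x - u x))" by (rule cSup_upper[OF _ ba]) auto
    then show ?thesis unfolding wfun_def Bconst_def by simp
  qed
  define Bp where "Bp = max B 0"
  define w' where "w' y = u y - Pop M u y + Bp" for y
  have wle: "wfun M u y \<le> w' y" for y unfolding wfun_def w'_def Bp_def B_def by simp
  have w'1: "1 \<le> w' y" for y using w1[of y] wle[of y] by simp
  have w'le: "w' y \<le> u y + Bp" for y unfolding w'_def using Pu0[of y] by simp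
  have Bp0: "0 \<le> Bp" unfolding Bp_def by simp
  have w'm: "w' \<in> borel_measurable borel" unfolding w'_def using um Pum by measurable
  have C0: "0 \<le> C" using C[of x] w1[of x] by (smt (verit) divide_nonneg_nonneg powr_ge_zero)
  have Cg: "\<bar>g y\<bar> powr p \<le> C * w' y" for y
  proof -
    have "\<bar>g y\<bar> powr p \<le> C * wfun M u y" using C[of y] w1[of y] by (simp add: divide_le_eq)
    also have "\<dots> \<le> C * w' y" using C0 wle by (intro mult_left_mono) auto
    finally show ?thesis .
  qed
  define D where "D = 2 powr p * (C + 1)"
  have D0: "0 \<le> D" unfolding D_def using C0 by simp
  have G1: "(\<bar>g y\<bar> + 1) powr p \<le> D * w' y" for y
  proof -
    have "(\<bar>g y\<bar> + 1) powr p \<le> 2 powr p * (\<bar>g y\<bar> powr p + 1 powr p)" by (rule PI4) (use p1 in auto)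
    also have "\<dots> \<le> 2 powr p * (C * w' y + w' y)" using Cg[of y] w'1[of y] by (intro mult_left_mono) auto
    finally show ?thesis unfolding D_def by (simp add: algebra_simps)
  qed
  have G1': "\<bar>g y\<bar> + 1 \<le> D * w' y" for y
  proof -
    have "\<bar>g y\<bar> + 1 = (\<bar>g y\<bar> + 1) powr 1" by simp
    also have "\<dots> \<le> (\<bar>g y\<bar> + 1) powr p" using p1 by (intro powr_mono) auto
    finally show ?thesis using G1[of y] by simp
  qed
  have iw': "integrable (M y) (\<lambda>\<omega>. w' (\<omega> 1))" for y
  proof (rule Bochner_Integration.integrable_bound)
    interpret prob_space "M y" by (rule ps)
    show "integrable (M y) (\<lambda>\<omega>. u (\<omega> 1) + Bp)" using ui by simp
    show "(\<lambda>\<omega>. w' (\<omega> 1)) \<in> borel_measurable (M y)" using measurable_compose[OF coord w'm] .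
    show "AE \<omega> in M y. norm (w' (\<omega> 1)) \<le> norm (u (\<omega> 1) + Bp)"
      using w'le w'1 u1 Bp0 by (intro AE_I2) (smt (verit) real_norm_def)
  qed
  have ig: "integrable (M y) (\<lambda>\<omega>. \<bar>g (\<omega> 1)\<bar> + 1)" for y
  proof (rule Bochner_Integration.integrable_bound)
    show "integrable (M y) (\<lambda>\<omega>. D * w' (\<omega> 1))" using iw' by simp
    show "(\<lambda>\<omega>. \<bar>g (\<omega> 1)\<bar> + 1) \<in> borel_measurable (M y)" using measurable_compose[OF coord gm] by measurable
    show "AE \<omega> in M y. norm (\<bar>g (\<omega> 1)\<bar> + 1) \<le> norm (D * w' (\<omega> 1))"
      using G1' by (intro AE_I2) (smt (verit) real_norm_def)
  qed
  have iq: "integrable (M y) (\<lambda>\<omega>. (\<bar>g (\<omega> 1)\<bar> + 1) powr p)" for y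
  proof (rule Bochner_Integration.integrable_bound)
    show "integrable (M y) (\<lambda>\<omega>. D * w' (\<omega> 1))" using iw' by simp
    show "(\<lambda>\<omega>. (\<bar>g (\<omega> 1)\<bar> + 1) powr p) \<in> borel_measurable (M y)" using measurable_compose[OF coord gm] by measurable
    show "AE \<omega> in M y. norm ((\<bar>g (\<omega> 1)\<bar> + 1) powr p) \<le> norm (D * w' (\<omega> 1))"
      using G1 by (intro AE_I2) (smt (verit) real_norm_def powr_ge_zero)
  qed
  have PG: "(\<bar>Pop M g y\<bar> + 1) powr p \<le> D * Pop M w' y" for y
  proof -
    interpret prob_space "M y" by (rule ps)
    have "\<bar>Pop M g y\<bar> + 1 \<le> (\<integral>\<omega>. \<bar>g (\<omega> 1)\<bar> + 1 \<partial>M y)"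
    proof -
      have "\<bar>Pop M g y\<bar> \<le> (\<integral>\<omega>. \<bar>g (\<omega> 1)\<bar> \<partial>M y)"
        unfolding Pop_def using integral_norm_bound[of "M y" "\<lambda>\<omega>. g (\<omega> 1)"] by simp
      moreover have "(\<integral>\<omega>. \<bar>g (\<omega> 1)\<bar> + 1 \<partial>M y) = (\<integral>\<omega>. \<bar>g (\<omega> 1)\<bar> \<partial>M y) + 1"
      proof -
        have "integrable (M y) (\<lambda>\<omega>. \<bar>g (\<omega> 1)\<bar>)"
          using Bochner_Integration.integrable_diff[OF ig[of y] integrable_const[of 1]] by simp
        then show ?thesis by (simp add: Bochner_Integration.integral_add prob_space)
      qed
      ultimately show ?thesis by simp
    qed
    then have "(\<bar>Pop M g y\<bar> + 1) powr p \<le> (\<integral>\<omega>. \<bar>g (\<omega> 1)\<bar> + 1 \<partial>M y) powr p"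
      by (intro powr_mono2) (use p1 in auto)
    also have "\<dots> \<le> (\<integral>\<omega>. (\<bar>g (\<omega> 1)\<bar> + 1) powr p \<partial>M y)"
      by (rule jensens_inequality[where I="{0<..}" and q="\<lambda>t. t powr p", OF ig _ _ iq powr_convex[OF p1(1)]])
         (auto intro!: AE_I2 simp: add_pos_nonneg)
    also have "\<dots> \<le> (\<integral>\<omega>. D * w' (\<omega> 1) \<partial>M y)"
      by (rule integral_mono[OF iq]) (use iw' G1 in auto)
    also have "\<dots> = D * Pop M w' y" unfolding Pop_def by simp
    finally show ?thesis .
  qed
  have nnPeq: "(\<integral>\<^sup>+\<omega>'. ennreal (f (\<omega>' 1)) \<partial>M y) = ennreal (Pop M f y)"
    if "integrable (M y) (\<lambda>\<omega>. f (\<omega> 1))" "\<And>z. 0 \<le> f z" for f y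
    unfolding Pop_def by (rule nn_integral_eq_integral) (use that in auto)
  define W where "W k = (\<integral>\<^sup>+\<omega>. ennreal (w' (\<omega> k)) \<partial>M x)" for k
  define A where "A k = (\<integral>\<^sup>+\<omega>. ennreal (u (\<omega> k)) \<partial>M x)" for k
  have u0: "0 \<le> u y" for y using u1[of y] by simp
  have w'0: "0 \<le> w' y" for y using w'1[of y] by simp
  have TS: "W k + A (Suc k) = A k + ennreal Bp" for k
  proof -
    interpret prob_space "M x" by (rule ps)
    have "A (Suc k) = (\<integral>\<^sup>+\<omega>. (\<integral>\<^sup>+\<omega>'. ennreal (u (\<omega>' 1)) \<partial>M (\<omega> k)) \<partial>M x)"
      unfolding A_def by (rule markov_K[OF mf um u0])
    also have "\<dots> = (\<integral>\<^sup>+\<omega>. ennreal (Pop M u (\<omega> k)) \<partial>M x)"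
      by (intro nn_integral_cong nnPeq ui u0)
    finally have As: "A (Suc k) = \<dots>" .
    have "W k + A (Suc k) = (\<integral>\<^sup>+\<omega>. (ennreal (w' (\<omega> k)) + ennreal (Pop M u (\<omega> k))) \<partial>M x)"
      unfolding As W_def
      by (rule nn_integral_add[symmetric]) (use measurable_compose[OF coord w'm] measurable_compose[OF coord Pum] in auto)
    also have "\<dots> = (\<integral>\<^sup>+\<omega>. (ennreal (u (\<omega> k)) + ennreal Bp) \<partial>M x)"
    proof (rule nn_integral_cong)
      fix \<omega>
      show "ennreal (w' (\<omega> k)) + ennreal (Pop M u (\<omega> k)) = ennreal (u (\<omega> k)) + ennreal Bp"
        using w'0[of "\<omega> k"] Pu0[of "\<omega> k"] u0[of "\<omega> k"] Bp0
        by (simp add: ennreal_plus[symmetric] w'_def del: ennreal_plus)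
    qed
    also have "\<dots> = A k + ennreal Bp"
      unfolding A_def using measurable_compose[OF coord um]
      by (simp add: nn_integral_add emeasure_space_1)
    finally show ?thesis .
  qed
  have A0: "A 0 = ennreal (u x)"
  proof -
    interpret prob_space "M x" by (rule ps)
    have "AE \<omega> in M x. \<omega> 0 = x" using mf unfolding markov_family_def by blast
    then have "A 0 = (\<integral>\<^sup>+\<omega>. ennreal (u x) \<partial>M x)" unfolding A_def
      by (intro nn_integral_cong_AE) auto
    then show ?thesis by (simp add: emeasure_space_1)
  qed
  have SUMW: "(\<Sum>k<n. W k) + A n = ennreal (u x) + of_nat n * ennreal Bp" for n
  proof (induction n)
    case 0 then show ?case using A0 by simp
  next
    case (Suc n)
    have "(\<Sum>k<Suc n. W k) + A (Suc n) = (\<Sum>k<n. W k) + (W n + A (Suc n))" by (simp add: add.assoc)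
    also have "\<dots> = ((\<Sum>k<n. W k) + A n) + ennreal Bp" by (simp add: TS add.assoc)
    also have "\<dots> = ennreal (u x) + of_nat (Suc n) * ennreal Bp" using Suc by (simp add: distrib_right add.assoc)
    finally show ?case .
  qed
  have SW: "(\<Sum>k<n. W k) \<le> ennreal (u x + real n * Bp)" for n
  proof -
    have "(\<Sum>k<n. W k) \<le> (\<Sum>k<n. W k) + A n" by simp
    also have "\<dots> = ennreal (u x + real n * Bp)"
      unfolding SUMW using u0[of x] Bp0
      by (simp add: ennreal_of_nat_eq_real_of_nat ennreal_mult[symmetric] ennreal_plus[symmetric] del: ennreal_plus)
    finally show ?thesis .
  qed
  define wr where "wr k = enn2real (W k)" for k
  have Wfin: "W k = ennreal (wr k)" for k
  proof -
    have "W k \<le> (\<Sum>j<Suc k. W j)" by (intro member_le_sum) auto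
    also have "\<dots> \<le> ennreal (u x + real (Suc k) * Bp)" by (rule SW)
    finally have "W k < top" using ennreal_less_top le_less_trans by blast
    then show ?thesis unfolding wr_def by simp
  qed
  have wr0: "0 \<le> wr k" for k unfolding wr_def by simp
  have SWr: "(\<Sum>k<n. wr k) \<le> u x + real n * Bp" for n
  proof -
    have "ennreal (\<Sum>k<n. wr k) = (\<Sum>k<n. W k)" by (simp add: Wfin wr0 sum_ennreal)
    then have "ennreal (\<Sum>k<n. wr k) \<le> ennreal (u x + real n * Bp)" using SW by simp
    moreover have "0 \<le> u x + real n * Bp" using u0[of x] Bp0 by simp
    ultimately show ?thesis by (simp only: ennreal_le_iff)
  qed
  define E where "E = 2 powr p * D"
  have E0: "0 \<le> E" unfolding E_def using D0 by simp
  define a where "a k = 2 * E * wr (Suc k)" for k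
  have a0: "0 \<le> a k" for k unfolding a_def using E0 wr0 by simp
  have Pw'm: "Pop M w' \<in> borel_measurable borel" by (rule meas_Pop[OF mf w'm])
  have hm: "(\<lambda>\<omega>. h k \<omega>) \<in> borel_measurable (M x)" for k
    unfolding h_def using measurable_compose[OF coord gm] measurable_compose[OF coord Pgm] by measurable
  have qm: "(\<lambda>\<omega>. \<bar>h k \<omega>\<bar> powr p) \<in> borel_measurable (M x)" for k
    using hm[of k] by measurable
  have HB: "(\<integral>\<^sup>+\<omega>. ennreal (\<bar>h k \<omega>\<bar> powr p) \<partial>M x) \<le> ennreal (a k)" for k
  proof -
    have pt: "\<bar>h k \<omega>\<bar> powr p \<le> E * (w' (\<omega> (Suc k)) + Pop M w' (\<omega> k))" for \<omega>
    proof -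
      let ?a = "\<bar>g (\<omega> (Suc k))\<bar> + 1" and ?b = "\<bar>Pop M g (\<omega> k)\<bar> + 1"
      have "\<bar>h k \<omega>\<bar> \<le> ?a + ?b" unfolding h_def by simp
      then have "\<bar>h k \<omega>\<bar> powr p \<le> (?a + ?b) powr p" by (intro powr_mono2) (use p1 in auto)
      also have "\<dots> \<le> 2 powr p * (?a powr p + ?b powr p)" by (rule PI4) (use p1 in auto)
      also have "\<dots> \<le> 2 powr p * (D * w' (\<omega> (Suc k)) + D * Pop M w' (\<omega> k))"
        using G1 PG by (intro mult_left_mono add_mono) auto
      finally show ?thesis unfolding E_def by (simp add: algebra_simps)
    qed
    have Pw'0: "0 \<le> Pop M w' y" for y
      unfolding Pop_def using w'0 by (simp add: Bochner_Integration.integral_nonneg)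
    have "(\<integral>\<^sup>+\<omega>. ennreal (\<bar>h k \<omega>\<bar> powr p) \<partial>M x) \<le>
        (\<integral>\<^sup>+\<omega>. (ennreal E * ennreal (w' (\<omega> (Suc k))) + ennreal E * ennreal (Pop M w' (\<omega> k))) \<partial>M x)"
    proof (rule nn_integral_mono)
      fix \<omega>
      have "ennreal E * ennreal (w' (\<omega> (Suc k))) + ennreal E * ennreal (Pop M w' (\<omega> k)) = ennreal (E * (w' (\<omega> (Suc k)) + Pop M w' (\<omega> k)))"
        using E0 w'0[of "\<omega> (Suc k)"] Pw'0[of "\<omega> k"]
        by (simp only: ennreal_mult[symmetric] ennreal_plus[symmetric] distrib_left mult_nonneg_nonneg)
      then show "ennreal (\<bar>h k \<omega>\<bar> powr p) \<le> ennreal E * ennreal (w' (\<omega> (Suc k))) + ennreal E * ennreal (Pop M w' (\<omega> k))"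
        using pt[of \<omega>] by (simp add: ennreal_leI)
    qed
    also have "\<dots> = ennreal E * W (Suc k) + ennreal E * (\<integral>\<^sup>+\<omega>. ennreal (Pop M w' (\<omega> k)) \<partial>M x)"
      unfolding W_def using measurable_compose[OF coord w'm] measurable_compose[OF coord Pw'm]
      by (simp add: nn_integral_add nn_integral_cmult)
    also have "(\<integral>\<^sup>+\<omega>. ennreal (Pop M w' (\<omega> k)) \<partial>M x) = W (Suc k)"
    proof -
      have "(\<integral>\<^sup>+\<omega>. ennreal (Pop M w' (\<omega> k)) \<partial>M x) = (\<integral>\<^sup>+\<omega>. (\<integral>\<^sup>+\<omega>'. ennreal (w' (\<omega>' 1)) \<partial>M (\<omega> k)) \<partial>M x)"
        by (intro nn_integral_cong nnPeq[symmetric] iw' w'0)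
      also have "\<dots> = W (Suc k)" unfolding W_def by (rule markov_K[OF mf w'm w'0, symmetric])
      finally show ?thesis .
    qed
    also have "ennreal E * W (Suc k) + ennreal E * W (Suc k) = ennreal (a k)"
      unfolding Wfin a_def using E0 wr0[of "Suc k"]
      by (simp only: ennreal_mult[symmetric] ennreal_plus[symmetric] mult_nonneg_nonneg) (simp add: algebra_simps)
    finally show ?thesis .
  qed
  define L where "L = 2 * E * (u x + Bp)"
  have L0: "0 \<le> L" unfolding L_def using E0 u0[of x] Bp0 by simp
  have Sa: "(\<Sum>k<n. a k) \<le> L * (real n + 1)" for n
  proof -
    have "(\<Sum>k<n. a k) = 2 * E * (\<Sum>k<n. wr (Suc k))" unfolding a_def by (simp add: sum_distrib_left)
    also have "(\<Sum>k<n. wr (Suc k)) \<le> (\<Sum>k<Suc n. wr k)" by (simp only: sum.lessThan_Suc_shift) (simp add: wr0)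
    also have "\<dots> \<le> u x + real (Suc n) * Bp" by (rule SWr)
    also have "\<dots> \<le> (u x + Bp) * (real n + 1)" using u0[of x] Bp0 by (simp add: algebra_simps)
    finally show ?thesis unfolding L_def using E0 by (simp add: mult_left_mono mult.assoc)
  qed
  have Sa': "(\<Sum>k<n. a (Suc k)) \<le> (2 * L) * (real n + 1)" for n
  proof -
    have "(\<Sum>k<n. a (Suc k)) \<le> (\<Sum>k<Suc n. a k)" by (simp only: sum.lessThan_Suc_shift) (simp add: a0)
    also have "\<dots> \<le> L * (real (Suc n) + 1)" by (rule Sa)
    also have "\<dots> \<le> (2 * L) * (real n + 1)" using L0 by (simp add: algebra_simps)
    finally show ?thesis .
  qed
  have psx: "prob_space (M x)" by (rule ps)
  have part1: "(\<lambda>n. (1 / real n) * (\<Sum>k<n. \<integral>\<omega>. (if \<bar>h k \<omega>\<bar> \<ge> \<epsilon> * sqrt (real n) then (h k \<omega>)\<^sup>2 else 0) \<partial>M x))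
              \<longlonglongrightarrow> 0" if \<epsilon>: "\<epsilon> > 0" for \<epsilon>
  proof (rule Lim_null_comparison)
    show "((\<lambda>n. 2 * L * \<epsilon> powr (- \<alpha>) * real n powr (- (\<alpha> / 2))) \<longlonglongrightarrow> 0)"
      by (intro tendsto_mult_right_zero tendsto_neg_powr filterlim_real_sequentially) (use assms(6) in simp)
    show "\<forall>\<^sub>F n in sequentially. norm ((1 / real n) * (\<Sum>k<n. \<integral>\<omega>. (if \<bar>h k \<omega>\<bar> \<ge> \<epsilon> * sqrt (real n) then (h k \<omega>)\<^sup>2 else 0) \<partial>M x))
        \<le> 2 * L * \<epsilon> powr (- \<alpha>) * real n powr (- (\<alpha> / 2))"
    proof (rule eventually_sequentiallyI[of 1])
      fix n :: nat assume n1: "1 \<le> n"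
      define c where "c = 1 / (\<epsilon> * sqrt (real n)) powr \<alpha>"
      have epos: "0 < \<epsilon> * sqrt (real n)" using \<epsilon> n1 by simp
      have c0: "0 \<le> c" unfolding c_def by simp
      have ib: "(\<integral>\<omega>. (if \<bar>h k \<omega>\<bar> \<ge> \<epsilon> * sqrt (real n) then (h k \<omega>)\<^sup>2 else 0) \<partial>M x) \<le> c * (0 + a k)" for k
      proof (rule int_bound[OF psx _ _ c0 _ _ qm HB a0])
        show "0 \<le> (if \<bar>h k \<omega>\<bar> \<ge> \<epsilon> * sqrt (real n) then (h k \<omega>)\<^sup>2 else 0)" for \<omega> by simp
        show "(if \<bar>h k \<omega>\<bar> \<ge> \<epsilon> * sqrt (real n) then (h k \<omega>)\<^sup>2 else 0) \<le> c * (0 + \<bar>h k \<omega>\<bar> powr p)" for \<omega>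
          using PI1[OF epos _ assms(6), of "h k \<omega>"] c0 unfolding c_def p_def by auto
      qed auto
      have inn: "0 \<le> (\<integral>\<omega>. (if \<bar>h k \<omega>\<bar> \<ge> \<epsilon> * sqrt (real n) then (h k \<omega>)\<^sup>2 else 0) \<partial>M x)" for k
        by (simp add: Bochner_Integration.integral_nonneg)
      have "norm ((1 / real n) * (\<Sum>k<n. \<integral>\<omega>. (if \<bar>h k \<omega>\<bar> \<ge> \<epsilon> * sqrt (real n) then (h k \<omega>)\<^sup>2 else 0) \<partial>M x))
          = (1 / real n) * (\<Sum>k<n. \<integral>\<omega>. (if \<bar>h k \<omega>\<bar> \<ge> \<epsilon> * sqrt (real n) then (h k \<omega>)\<^sup>2 else 0) \<partial>M x)"
        using inn by (simp add: sum_nonneg)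
      also have "\<dots> \<le> (1 / real n) * (\<Sum>k<n. c * a k)"
        using ib by (intro mult_left_mono sum_mono) auto
      also have "\<dots> = (1 / real n) * c * (\<Sum>k<n. a k)" by (simp add: sum_distrib_left)
      also have "\<dots> \<le> (1 / real n) * c * (L * (real n + 1))"
        using Sa c0 by (intro mult_left_mono) auto
      also have "\<dots> \<le> 2 * L * \<epsilon> powr (- \<alpha>) * real n powr (- (\<alpha> / 2))"
        unfolding c_def by (rule PW3) (use n1 \<epsilon> L0 in auto)
      finally show "norm ((1 / real n) * (\<Sum>k<n. \<integral>\<omega>. (if \<bar>h k \<omega>\<bar> \<ge> \<epsilon> * sqrt (real n) then (h k \<omega>)\<^sup>2 else 0) \<partial>M x))
        \<le> 2 * L * \<epsilon> powr (- \<alpha>) * real n powr (- (\<alpha> / 2))" .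
    qed
  qed
  have part2: "summable (\<lambda>n. (1 / sqrt (real (Suc n))) *
              (\<integral>\<omega>. (if \<bar>h (Suc n) \<omega>\<bar> \<ge> \<epsilon> * sqrt (real (Suc n)) then \<bar>h (Suc n) \<omega>\<bar> else 0) \<partial>M x))"
    if \<epsilon>: "\<epsilon> > 0" for \<epsilon>
  proof (rule summable_comparison_test')
    define s where "s = 1 + \<alpha> / 2"
    have s1: "1 < s" unfolding s_def using assms(6) by simp
    have "summable (\<lambda>k. a (Suc k) * real (Suc k) powr (- s))"
      by (rule abel_summable[OF a0 _ _ powr_summable_shift[OF s1] Sa'])
         (use s1 powr_dec_shift[of s] in auto)
    then show "summable (\<lambda>n. \<epsilon> powr (- (1 + \<alpha>)) * (a (Suc n) * real (Suc n) powr (- s)))"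
      by (rule summable_mult)
    fix n :: nat
    define m where "m = real (Suc n)"
    have m0: "0 < m" unfolding m_def by simp
    define c where "c = 1 / (\<epsilon> * sqrt m) powr (1 + \<alpha>)"
    have epos: "0 < \<epsilon> * sqrt m" using \<epsilon> m0 by simp
    have c0: "0 \<le> c" unfolding c_def by simp
    have ib: "(\<integral>\<omega>. (if \<bar>h (Suc n) \<omega>\<bar> \<ge> \<epsilon> * sqrt m then \<bar>h (Suc n) \<omega>\<bar> else 0) \<partial>M x) \<le> c * (0 + a (Suc n))"
    proof (rule int_bound[OF psx _ _ c0 _ _ qm HB a0])
      show "0 \<le> (if \<bar>h (Suc n) \<omega>\<bar> \<ge> \<epsilon> * sqrt m then \<bar>h (Suc n) \<omega>\<bar> else 0)" for \<omega> by simp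
      show "(if \<bar>h (Suc n) \<omega>\<bar> \<ge> \<epsilon> * sqrt m then \<bar>h (Suc n) \<omega>\<bar> else 0) \<le> c * (0 + \<bar>h (Suc n) \<omega>\<bar> powr p)" for \<omega>
        using PI2[OF epos _ assms(6), of "h (Suc n) \<omega>"] c0 unfolding c_def p_def by auto
    qed auto
    have inn: "0 \<le> (\<integral>\<omega>. (if \<bar>h (Suc n) \<omega>\<bar> \<ge> \<epsilon> * sqrt m then \<bar>h (Suc n) \<omega>\<bar> else 0) \<partial>M x)"
      by (simp add: Bochner_Integration.integral_nonneg)
    have "norm ((1 / sqrt m) * (\<integral>\<omega>. (if \<bar>h (Suc n) \<omega>\<bar> \<ge> \<epsilon> * sqrt m then \<bar>h (Suc n) \<omega>\<bar> else 0) \<partial>M x))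
        = (1 / sqrt m) * (\<integral>\<omega>. (if \<bar>h (Suc n) \<omega>\<bar> \<ge> \<epsilon> * sqrt m then \<bar>h (Suc n) \<omega>\<bar> else 0) \<partial>M x)"
      using inn m0 by simp
    also have "\<dots> \<le> (1 / sqrt m) * (c * a (Suc n))" using ib m0 by (intro mult_left_mono) auto
    also have "\<dots> = (1 / sqrt m * c) * a (Suc n)" by simp
    also have "1 / sqrt m * c = \<epsilon> powr (- (1 + \<alpha>)) * m powr (- (1 + \<alpha> / 2))"
      unfolding c_def by (rule PW1[OF m0 \<epsilon>])
    finally show "norm ((1 / sqrt (real (Suc n))) *
              (\<integral>\<omega>. (if \<bar>h (Suc n) \<omega>\<bar> \<ge> \<epsilon> * sqrt (real (Suc n)) then \<bar>h (Suc n) \<omega>\<bar> else 0) \<partial>M x))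
       \<le> \<epsilon> powr (- (1 + \<alpha>)) * (a (Suc n) * real (Suc n) powr (- s))"
      unfolding m_def s_def by (simp add: mult_ac)
  qed
  have part3: "summable (\<lambda>n. (1 / (real (Suc n))\<^sup>2) *
              (\<integral>\<omega>. (if \<bar>h (Suc n) \<omega>\<bar> \<le> 1 * sqrt (real (Suc n)) then (h (Suc n) \<omega>) ^ 4 else 0) \<partial>M x))"
  proof (rule summable_comparison_test')
    define s where "s = 1 + min \<alpha> 2 / 2"
    have s1: "1 < s" unfolding s_def using assms(6) by simp
    have Sa'': "(\<Sum>k<n. 1 + a (Suc k)) \<le> (2 * L + 1) * (real n + 1)" for n
    proof -
      have "(\<Sum>k<n. 1 + a (Suc k)) = real n + (\<Sum>k<n. a (Suc k))" by (simp add: sum.distrib)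
      also have "\<dots> \<le> real n + (2 * L) * (real n + 1)" using Sa'[of n] by simp
      also have "\<dots> \<le> (2 * L + 1) * (real n + 1)" by (simp add: algebra_simps)
      finally show ?thesis .
    qed
    show "summable (\<lambda>k. (1 + a (Suc k)) * real (Suc k) powr (- s))"
      by (rule abel_summable[OF _ _ _ powr_summable_shift[OF s1] Sa''])
         (use s1 powr_dec_shift[of s] a0 in auto)
    fix n :: nat
    define m where "m = real (Suc n)"
    have m1: "1 \<le> m" unfolding m_def by simp
    define c where "c = m powr (1 - min \<alpha> 2 / 2)"
    have c0: "0 \<le> c" unfolding c_def by simp
    have ib: "(\<integral>\<omega>. (if \<bar>h (Suc n) \<omega>\<bar> \<le> 1 * sqrt m then (h (Suc n) \<omega>) ^ 4 else 0) \<partial>M x) \<le> c * (1 + a (Suc n))"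
    proof (rule int_bound[OF psx _ _ c0 _ _ qm HB a0])
      show "0 \<le> (if \<bar>h (Suc n) \<omega>\<bar> \<le> 1 * sqrt m then (h (Suc n) \<omega>) ^ 4 else 0)" for \<omega> by simp
      show "(if \<bar>h (Suc n) \<omega>\<bar> \<le> 1 * sqrt m then (h (Suc n) \<omega>) ^ 4 else 0) \<le> c * (1 + \<bar>h (Suc n) \<omega>\<bar> powr p)" for \<omega>
        using PI3[OF m1 _ assms(6), of "h (Suc n) \<omega>"] c0 unfolding c_def p_def
        by (auto intro: mult_nonneg_nonneg)
    qed auto
    have inn: "0 \<le> (\<integral>\<omega>. (if \<bar>h (Suc n) \<omega>\<bar> \<le> 1 * sqrt m then (h (Suc n) \<omega>) ^ 4 else 0) \<partial>M x)"
      by (simp add: Bochner_Integration.integral_nonneg)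
    have "norm ((1 / m\<^sup>2) * (\<integral>\<omega>. (if \<bar>h (Suc n) \<omega>\<bar> \<le> 1 * sqrt m then (h (Suc n) \<omega>) ^ 4 else 0) \<partial>M x))
        = (1 / m\<^sup>2) * (\<integral>\<omega>. (if \<bar>h (Suc n) \<omega>\<bar> \<le> 1 * sqrt m then (h (Suc n) \<omega>) ^ 4 else 0) \<partial>M x)"
      using inn m1 by simp
    also have "\<dots> \<le> (1 / m\<^sup>2) * (c * (1 + a (Suc n)))" using ib m1 by (intro mult_left_mono) auto
    also have "\<dots> = (1 / m\<^sup>2 * c) * (1 + a (Suc n))" by simp
    also have "1 / m\<^sup>2 * c = m powr (- (1 + min \<alpha> 2 / 2))"
      unfolding c_def by (rule PW2) (use m1 in simp)
    finally show "norm ((1 / (real (Suc n))\<^sup>2) *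
              (\<integral>\<omega>. (if \<bar>h (Suc n) \<omega>\<bar> \<le> 1 * sqrt (real (Suc n)) then (h (Suc n) \<omega>) ^ 4 else 0) \<partial>M x))
       \<le> (1 + a (Suc n)) * real (Suc n) powr (- s)"
      unfolding m_def s_def by (simp add: mult_ac)
  qed
  show ?thesis using part1 part2 part3 by (intro conjI allI impI exI[of _ 1]) auto
qed


end
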